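(* Let $P_1,\dots,P_5\in\mathbb{R}^3$, indices taken mod 5, satisfy $\det(P_{i-1},P_i,P_{i+1})=1$ for all $i$, and let $a_i,b_i$ (5-periodic) be the coefficients with $P_{i+2}=a_{i+1}P_{i+1}-b_iP_i+P_{i-1}$ for all $i$. Then for all $i$ (mod 5), $$b_i=a_{i+3},\qquad a_i+1=a_{i+2}a_{i+3}.$$
   Context: A polygon $(P_i)$ in $\mathbb{R}^3$ with $\det(P_{i-1},P_i,P_{i+1})=1$ for all $i$ is called unimodular; for such a polygon the vectors $P_{i-1},P_i,P_{i+1}$ form a basis, and the unimodularity forces the coefficient of $P_{i-1}$ in the expansion of $P_{i+2}$ to be $1$, so the recurrence $P_{i+2}=a_{i+1}P_{i+1}-b_iP_i+P_{i-1}$ defines the sequences $a_i,b_i$. *)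

theory Defs
  imports "HOL-Analysis.Analysis"
begin

text \<open>Determinant of the 3x3 matrix whose rows (equivalently columns, since
  the determinant is transpose-invariant) are the vectors u, v, w.\<close>
definition det3 :: "real^3 \<Rightarrow> real^3 \<Rightarrow> real^3 \<Rightarrow> real" where
  "det3 u v w = det (vector [u, v, w] :: real^3^3)"

end

theory Submission
  imports Defs
begin

lemma det3_expand: "det3 u v w = (u$1)*(v$2)*(w$3) - (u$1)*(v$3)*(w$2) - (u$2)*(v$1)*(w$3) + (u$2)*(v$3)*(w$1) + (u$3)*(v$1)*(w$2) - (u$3)*(v$2)*(w$1)"
  unfolding det3_def det_3 by (simp add: vector_def algebra_simps)

lemma det3_c3: "det3 u v (x *\<^sub>R u + y *\<^sub>R v + z *\<^sub>R w) = z * det3 u v w"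
  unfolding det3_expand by (simp add: algebra_simps)

lemma det3_c1: "det3 (x *\<^sub>R u + y *\<^sub>R v + z *\<^sub>R w) v w = x * det3 u v w"
  unfolding det3_expand by (simp add: algebra_simps)

lemma coeffs:
  assumes "det3 u v w = 1" "w = x *\<^sub>R u + y *\<^sub>R v + z *\<^sub>R w"
  shows "x = 0" "z = 1"
proof -
  have "det3 w v w = x * det3 u v w" using assms(2) det3_c1[of x u y v z w] by metis
  moreover have "det3 w v w = 0" unfolding det3_expand by (simp add: algebra_simps)
  ultimately show "x = 0" using assms(1) by simp
  have "det3 u v w = z * det3 u v w" using assms(2) det3_c3[of u v x y z w] by metis
  then show "z = 1" using assms(1) by simp
qed

lemma coeffs2:
  assumes "det3 u v w = 1" "v = x *\<^sub>R u + y *\<^sub>R v + z *\<^sub>R w"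
  shows "x = 0" "z = 0"
proof -
  have "det3 v v w = x * det3 u v w" using assms(2) det3_c1[of x u y v z w] by metis
  moreover have "det3 v v w = 0" unfolding det3_expand by (simp add: algebra_simps)
  ultimately show "x = 0" using assms(1) by simp
  have "det3 u v v = z * det3 u v w" using assms(2) det3_c3[of u v x y z w] by metis
  moreover have "det3 u v v = 0" unfolding det3_expand by (simp add: algebra_simps)
  ultimately show "z = 0" using assms(1) by simp
qed

theorem lemma2p1:
  fixes P :: "int \<Rightarrow> real^3" and a b :: "int \<Rightarrow> real"
  assumes P_per: "\<And>i. P (i + 5) = P i"
    and a_per: "\<And>i. a (i + 5) = a i"
    and b_per: "\<And>i. b (i + 5) = b i"
    and unimod: "\<And>i. det3 (P (i - 1)) (P i) (P (i + 1)) = 1"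
    and recur: "\<And>i. P (i + 2) = a (i + 1) *\<^sub>R P (i + 1) - b i *\<^sub>R P i + P (i - 1)"
  shows "\<forall>i. b i = a (i + 3) \<and> a i + 1 = a (i + 2) * a (i + 3)"
proof
  fix i
  define e0 e1 e2 where "e0 = P i" "e1 = P (i+1)" "e2 = P (i+2)"
  have D: "det3 e0 e1 e2 = 1" using unimod[of "i+1"] unfolding e0_e1_e2_def by (simp add: add.assoc)
  have r: "\<And>k. P (i + k + 2) = a (i + k + 1) *\<^sub>R P (i + k + 1) - b (i+k) *\<^sub>R P (i+k) + P (i + k - 1)"
    using recur by simp
  have P3: "P (i+3) = e0 - b (i+1) *\<^sub>R e1 + a (i+2) *\<^sub>R e2"
    using r[of 1] unfolding e0_e1_e2_def by (simp add: add.assoc algebra_simps)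
  have P4: "P (i+4) = a (i+3) *\<^sub>R e0 + (1 - a (i+3) * b (i+1)) *\<^sub>R e1 + (a (i+2) * a (i+3) - b (i+2)) *\<^sub>R e2"
    using r[of 2] P3 unfolding e0_e1_e2_def by (simp add: add.assoc algebra_simps)
  have r6: "P (i+1) = a i *\<^sub>R e0 - b (i+4) *\<^sub>R P (i+4) + P (i+3)"
    using r[of 4] P_per[of i] P_per[of "i+1"] a_per[of i] unfolding e0_e1_e2_def
    by (simp add: add.assoc algebra_simps)
  have r7: "P (i+2) = a (i+1) *\<^sub>R e1 - b i *\<^sub>R e0 + P (i+4)"
    using r[of 5] P_per[of i] P_per[of "i+1"] P_per[of "i+2"] a_per[of "i+1"] b_per[of i]
    unfolding e0_e1_e2_def by (simp add: add.assoc algebra_simps)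
  have E7: "e2 = (a (i+3) - b i) *\<^sub>R e0 + (a (i+1) + 1 - a (i+3) * b (i+1)) *\<^sub>R e1 + (a (i+2) * a (i+3) - b (i+2)) *\<^sub>R e2"
    using r7 P4 unfolding e0_e1_e2_def by (simp add: algebra_simps)
  from coeffs[OF D E7] have c1: "b i = a (i+3)" and c2: "a (i+2) * a (i+3) - b (i+2) = 1" by auto
  have E6: "e1 = (a i - b (i+4) * a (i+3) + 1) *\<^sub>R e0 + (- b (i+4) * (1 - a (i+3) * b (i+1)) - b (i+1)) *\<^sub>R e1 + (a (i+2) - b (i+4) * (a (i+2) * a (i+3) - b (i+2))) *\<^sub>R e2"
    using r6 P4 P3 unfolding e0_e1_e2_def by (simp add: algebra_simps)
  from coeffs2[OF D E6] c2 have "a i - b (i+4) * a (i+3) + 1 = 0" "b (i+4) = a (i+2)" by auto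
  then show "b i = a (i + 3) \<and> a i + 1 = a (i + 2) * a (i + 3)" using c1 by (simp add: algebra_simps)
qed

end
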